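(* Let $\eta$ be the probability measure $\mathbf{1}_{x\ge0}e^{-x}dx$ on $\mathbb{R}$ and $\eta^n$ its $n$-fold product. For every countable subset $V\subset\mathbb{R}^n$, $$\log\int\exp\Big(\sup_{\xi\in V}\{\langle\xi,x\rangle-\Lambda_{\eta^n}(\xi)\}\Big)\,d\eta^n(x)\le\int\sup_{\xi\in V}\langle\Lambda_\eta(\xi),x-u\rangle\,d\eta^n(x),$$ where $u=(1,\dots,1)$ and $\Lambda_\eta(\xi)=(\Lambda_\eta(\xi_1),\dots,\Lambda_\eta(\xi_n))$.
   Context: For a probability measure $\mu$, $\Lambda_\mu(\xi)=\log\int e^{\langle\xi,x\rangle}d\mu(x)$ is its logarithmic Laplace transform; thus $\Lambda_\eta(t)=-\log(1-t)$ for $t<1$ and $+\infty$ otherwise, and $\Lambda_{\eta^n}(\xi)=\sum_i\Lambda_\eta(\xi_i)$. *)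

theory Defs
  imports "HOL-Probability.Probability"
begin

definition eta :: "real measure" where
  "eta = density lborel (\<lambda>x. ennreal (indicator {0..} x * exp (- x)))"

definition eta_n :: "('n::finite \<Rightarrow> real) measure" where
  "eta_n = PiM UNIV (\<lambda>_. eta)"

definition Lambda_eta :: "real \<Rightarrow> ereal" where
  "Lambda_eta t = (if t < 1 then ereal (- ln (1 - t)) else \<infinity>)"

definition Lambda_eta_n :: "('n::finite \<Rightarrow> real) \<Rightarrow> ereal" where
  "Lambda_eta_n \<xi> = (\<Sum>i\<in>UNIV. Lambda_eta (\<xi> i))"

definition inner_fun :: "('n::finite \<Rightarrow> real) \<Rightarrow> ('n \<Rightarrow> real) \<Rightarrow> real" where
  "inner_fun \<xi> x = (\<Sum>i\<in>UNIV. \<xi> i * x i)"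

definition inner_Lambda :: "('n::finite \<Rightarrow> real) \<Rightarrow> ('n \<Rightarrow> real) \<Rightarrow> ereal" where
  "inner_Lambda \<xi> x = (\<Sum>i\<in>UNIV. Lambda_eta (\<xi> i) * ereal (x i - 1))"

definition ereal_exp :: "ereal \<Rightarrow> ennreal" where
  "ereal_exp y = (if y = -\<infinity> then 0 else if y = \<infinity> then \<infinity> else ennreal (exp (real_of_ereal y)))"

definition ennreal_ln :: "ennreal \<Rightarrow> ereal" where
  "ennreal_ln y = (if y = 0 then -\<infinity> else if y = \<infinity> then \<infinity> else ereal (ln (enn2real y)))"

definition ereal_integral :: "'a measure \<Rightarrow> ('a \<Rightarrow> ereal) \<Rightarrow> ereal" where
  "ereal_integral M f =
     enn2ereal (\<integral>\<^sup>+ x. e2ennreal (f x) \<partial>M) - enn2ereal (\<integral>\<^sup>+ x. e2ennreal (- f x) \<partial>M)"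

end

theory Submission
  imports Defs "HOL-Real_Asymp.Real_Asymp"
begin


lemma oneD_part1:
  fixes F :: "real \<Rightarrow> real"
  assumes contF: "continuous_on UNIV F"
  and dpos: "\<delta> > 0" and up: "\<And>t. t \<ge> 0 \<Longrightarrow> F t \<le> C + (1 - \<delta>) * t"
  and Bpos: "B \<ge> 0" and low: "\<And>t. t \<ge> 0 \<Longrightarrow> F t \<ge> A - B * t"
  and a: "a \<ge> 0"
  shows "(\<lambda>t. exp (F t - t)) integrable_on {a..}"
    and "integral {a..} (\<lambda>t. exp (F t - t)) \<le> exp C * exp (- \<delta> * a) / \<delta>"
    and "integral {a..} (\<lambda>t. exp (F t - t)) \<ge> exp A * exp (- (1 + B) * a) / (1 + B)"
proof -
  let ?q = "\<lambda>t. exp (F t - t)"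
  have cq: "continuous_on UNIV ?q"
    by (intro continuous_intros contF)
  have e1: "((\<lambda>t. exp C * exp (- \<delta> * t)) has_integral exp C * (exp (- \<delta> * a) / \<delta>)) {a..}"
    by (intro has_integral_mult_right has_integral_exp_minus_to_infinity dpos)
  have e2: "((\<lambda>t. exp A * exp (- (1 + B) * t)) has_integral exp A * (exp (- (1+B) * a) / (1+B))) {a..}"
    using Bpos by (intro has_integral_mult_right has_integral_exp_minus_to_infinity) auto
  have qle: "norm (?q t) \<le> exp C * exp (- \<delta> * t)" if "t \<in> {a..}" for t
  proof -
    have "F t - t \<le> C + (- \<delta> * t)" using up[of t] that a by (auto simp: algebra_simps)
    then have "?q t \<le> exp (C + (- \<delta> * t))" by simp
    also have "\<dots> = exp C * exp (- \<delta> * t)" by (rule exp_add)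
    finally show ?thesis by simp
  qed
  have meas: "?q \<in> borel_measurable (lebesgue_on {a..})"
    by (intro continuous_imp_measurable_on_sets_lebesgue continuous_on_subset[OF cq]) auto
  have ai: "?q absolutely_integrable_on {a..}"
    by (rule measurable_bounded_by_integrable_imp_absolutely_integrable[OF meas _ _ qle]) (use e1 in auto)
  then show qi: "?q integrable_on {a..}" using set_lebesgue_integral_eq_integral(1) by blast
  show "integral {a..} ?q \<le> exp C * exp (- \<delta> * a) / \<delta>"
  proof -
    have "integral {a..} ?q \<le> integral {a..} (\<lambda>t. exp C * exp (- \<delta> * t))"
      using qle by (intro integral_le[OF qi has_integral_integrable[OF e1]]) auto
    also have "\<dots> = exp C * (exp (- \<delta> * a) / \<delta>)" by (rule integral_unique[OF e1])
    finally show ?thesis by simp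
  qed
  have qge: "exp A * exp (- (1 + B) * t) \<le> ?q t" if "t \<in> {a..}" for t
  proof -
    have h: "A + (- (1+B) * t) \<le> F t - t" using low[of t] that a by (auto simp: algebra_simps)
    have "exp A * exp (- (1+B) * t) = exp (A + (- (1+B) * t))" by (rule exp_add[symmetric])
    also have "\<dots> \<le> ?q t" using h by (subst exp_le_cancel_iff)
    finally show ?thesis .
  qed
  show "integral {a..} ?q \<ge> exp A * exp (- (1 + B) * a) / (1 + B)"
  proof -
    have "integral {a..} ?q \<ge> integral {a..} (\<lambda>t. exp A * exp (- (1 + B) * t))"
      using qge by (intro integral_le[OF has_integral_integrable[OF e2] qi]) auto
    moreover have "integral {a..} (\<lambda>t. exp A * exp (- (1 + B) * t)) = exp A * (exp (- (1+B) * a) / (1+B))" by (rule integral_unique[OF e2])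
    ultimately show ?thesis by simp
  qed
qed


lemma key_ineq:
  fixes \<mu> w :: real
  assumes "\<mu> > 0" "w > 0"
  shows "0 \<le> \<mu> * (ln \<mu> - ln w - 1) + w"
proof -
  have "ln (w / \<mu>) \<le> w / \<mu> - 1" using assms by (intro ln_le_minus_one) auto
  then have "\<mu> * ln (w / \<mu>) \<le> \<mu> * (w / \<mu> - 1)" using assms by (intro mult_left_mono) auto
  then show ?thesis using assms by (simp add: ln_div algebra_simps)
qed

lemma oneD:
  fixes F G :: "real \<Rightarrow> real"
  assumes contF: "continuous_on UNIV F" and contG: "continuous_on UNIV G"
  and rel: "\<And>x y. x > 0 \<Longrightarrow> y > 0 \<Longrightarrow> F x \<le> G y + (y * ln (y / x) - y + x)"
  and dpos: "\<delta> > 0" and up: "\<And>t. t \<ge> 0 \<Longrightarrow> F t \<le> C + (1 - \<delta>) * t"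
  and Bpos: "B \<ge> 0" and low: "\<And>t. t \<ge> 0 \<Longrightarrow> F t \<ge> A - B * t"
  and intG: "integrable eta G"
  shows "(\<integral>\<^sup>+x. ennreal (exp (F x)) \<partial>eta) \<le> ennreal (exp (\<integral>x. G x \<partial>eta))"
proof -
  define q where "q = (\<lambda>t. exp (F t - t))"
  have cq: "continuous_on UNIV q" unfolding q_def by (intro continuous_intros contF)
  have qpos: "q t > 0" for t unfolding q_def by simp
  note P0 = oneD_part1[OF contF dpos up Bpos low, folded q_def]
  have P1: "\<And>a. a \<ge> 0 \<Longrightarrow> q integrable_on {a..}"
     "\<And>a. a \<ge> 0 \<Longrightarrow> integral {a..} q \<le> exp C * exp (- \<delta> * a) / \<delta>"
     "\<And>a. a \<ge> 0 \<Longrightarrow> exp A * exp (- (1 + B) * a) / (1 + B) \<le> integral {a..} q"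
    by (rule P0; simp)+
  define T where "T a = integral {a..} q" for a
  define Z where "Z = T 0"
  have Zpos: "Z > 0"
  proof -
    have "exp A * exp (- (1 + B) * 0) / (1 + B) \<le> Z" unfolding Z_def T_def using P1(3)[of 0] by simp
    moreover have "exp A * exp (- (1 + B) * 0) / (1 + B) > 0" using Bpos by simp
    ultimately show ?thesis by linarith
  qed
  define R where "R x = integral {0..x} q" for x
  have RT: "R x + T x = Z" if "x \<ge> 0" for x
  proof -
    have h1: "(q has_integral R x) {0..x}" unfolding R_def
      by (intro integrable_integral integrable_continuous_interval continuous_on_subset[OF cq]) auto
    have h2: "(q has_integral T x) {x..}" unfolding T_def using P1(1) that by (intro integrable_integral) auto
    have "(q has_integral (R x + T x)) ({0..x} \<union> {x..})"
      by (rule has_integral_Un[OF h1 h2]) (use that in \<open>auto intro: negligible_subset[of "{x}"]\<close>)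
    moreover have "{0..x} \<union> {x..} = {0::real..}" using that by auto
    ultimately have "(q has_integral (R x + T x)) {0..}" by simp
    then show ?thesis unfolding Z_def T_def by (rule integral_unique[symmetric])
  qed
  have Rpos: "R x > 0" if "x > 0" for x
  proof -
    define c where "c = exp A * exp (- (1 + B) * x)"
    have cpos: "c > 0" unfolding c_def by simp
    have "c \<le> q t" if "t \<in> {0..x}" for t
    proof -
      have "A + (- (1+B) * x) \<le> A + (- (1+B) * t)" using that Bpos by (intro add_left_mono) (auto intro: mult_left_mono)
      also have "\<dots> \<le> F t - t" using low[of t] that by (auto simp: algebra_simps)
      finally have "exp (A + (- (1+B) * x)) \<le> q t" unfolding q_def by simp
      then show ?thesis unfolding c_def by (simp add: exp_add)
    qed
    then have "integral {0..x} (\<lambda>_. c) \<le> R x" unfolding R_def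
      by (intro integral_le integrable_continuous_interval continuous_on_subset[OF cq]) auto
    moreover have "integral {0..x} (\<lambda>_. c) = x * c" using that by simp
    ultimately show ?thesis using cpos that by (smt (verit) mult_pos_pos)
  qed
  define \<tau> where "\<tau> x = 1 - R x / Z" for x
  have R0: "R 0 = 0" unfolding R_def by simp
  have \<tau>T: "\<tau> x = T x / Z" if "x \<ge> 0" for x
    using RT[OF that] Zpos unfolding \<tau>_def by (simp add: field_simps)
  have \<tau>pos: "\<tau> x > 0" if "x \<ge> 0" for x
  proof -
    have "T x \<ge> exp A * exp (- (1 + B) * x) / (1 + B)" unfolding T_def by (rule P1(3)[OF that])
    moreover have "exp A * exp (- (1 + B) * x) / (1 + B) > 0" using Bpos by simp
    ultimately show ?thesis using \<tau>T[OF that] Zpos by simp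
  qed
  have \<tau>lt1: "\<tau> x < 1" if "x > 0" for x
    using Rpos[OF that] Zpos unfolding \<tau>_def by simp
  have \<tau>le: "\<tau> x \<le> exp C * exp (- \<delta> * x) / \<delta> / Z" if "x \<ge> 0" for x
  proof -
    have "T x / Z \<le> (exp C * exp (- \<delta> * x) / \<delta>) / Z"
      using P1(2)[OF that] Zpos unfolding T_def by (intro divide_right_mono) auto
    then show ?thesis using \<tau>T[OF that] by simp
  qed
  define L where "L x = - ln (\<tau> x)" for x
  have Lpos: "L x > 0" if "x > 0" for x
    using \<tau>lt1[OF that] \<tau>pos[of x] that unfolding L_def by simp
  have expL: "exp (- L x) = \<tau> x" if "x \<ge> 0" for x
    using \<tau>pos[OF that] unfolding L_def by simp
  define g where "g y = G y * exp (- y)" for y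
  have cg: "continuous_on UNIV g" unfolding g_def by (intro continuous_intros contG)
  define Gi where "Gi u = integral {0..u} g" for u
  define \<Gamma> where "\<Gamma> x = Gi (L x) - (1 - \<tau> x) * ln Z - \<tau> x * L x * ln (L x / x)" for x
  have dR: "(R has_real_derivative q x) (at x within {0..x+1})" if "x \<ge> 0" for x
    unfolding R_def using that
    by (intro integral_has_real_derivative continuous_on_subset[OF cq]) auto
  have dRo: "(R has_real_derivative q x) (at x)" if "x > 0" for x
    using dR[of x] that at_within_Icc_at[of 0 x "x+1"] by simp
  have dGi: "(Gi has_real_derivative g u) (at u)" if "u > 0" for u
  proof -
    have "(Gi has_real_derivative g u) (at u within {0..u+1})" unfolding Gi_def using that
      by (intro integral_has_real_derivative continuous_on_subset[OF cg]) auto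
    then show ?thesis using at_within_Icc_at[of 0 u "u+1"] that by simp
  qed
  have d\<tau>: "(\<tau> has_real_derivative - (q x / Z)) (at x within S)"
    if "(R has_real_derivative q x) (at x within S)" for x S
    unfolding \<tau>_def using Zpos by (auto intro!: derivative_eq_intros that simp: field_simps)
  have dL: "(L has_real_derivative (q x / Z) / \<tau> x) (at x within S)"
    if "(R has_real_derivative q x) (at x within S)" "x \<ge> 0" for x S
    unfolding L_def using \<tau>pos[OF that(2)]
    by (auto intro!: derivative_eq_intros d\<tau>[OF that(1)])
  have dG: "\<exists>y. (\<Gamma> has_real_derivative y) (at x) \<and> y \<ge> 0" if xpos: "x > 0" for x
  proof -
    define \<mu> where "\<mu> = q x / Z"
    define Lp where "Lp = \<mu> / \<tau> x"
    have \<mu>pos: "\<mu> > 0" unfolding \<mu>_def using qpos Zpos by simp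
    have tp: "\<tau> x > 0" using \<tau>pos xpos by simp
    have Lp: "L x > 0" using Lpos xpos by simp
    have dLx: "(L has_real_derivative Lp) (at x)" unfolding Lp_def \<mu>_def using dL[OF dRo[OF xpos]] xpos by simp
    have dtx: "(\<tau> has_real_derivative - \<mu>) (at x)" unfolding \<mu>_def using d\<tau>[OF dRo[OF xpos]] by simp
    have d1: "((\<lambda>x. Gi (L x)) has_real_derivative g (L x) * Lp) (at x)"
      by (rule DERIV_chain2[OF dGi[OF Lp] dLx])
    have d2: "((\<lambda>x. (1 - \<tau> x) * ln Z) has_real_derivative \<mu> * ln Z) (at x)"
      using dtx by (auto intro!: derivative_eq_intros)
    have d3: "((\<lambda>x. ln (L x / x)) has_real_derivative (Lp / L x - 1 / x)) (at x)"
      using dLx Lp xpos by (auto intro!: derivative_eq_intros simp: field_simps power2_eq_square)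
    have d4: "((\<lambda>x. \<tau> x * L x * ln (L x / x)) has_real_derivative
        ((- \<mu>) * L x + \<tau> x * Lp) * ln (L x / x) + \<tau> x * L x * (Lp / L x - 1 / x)) (at x)"
      by (rule DERIV_cong[OF DERIV_mult[OF DERIV_mult[OF dtx dLx] d3]]) (simp add: algebra_simps)
    have dd: "(\<Gamma> has_real_derivative (g (L x) * Lp - \<mu> * ln Z -
        (((- \<mu>) * L x + \<tau> x * Lp) * ln (L x / x) + \<tau> x * L x * (Lp / L x - 1 / x)))) (at x)"
      unfolding \<Gamma>_def[abs_def] by (rule DERIV_diff[OF DERIV_diff[OF d1 d2] d4])
    define r where "r = L x / x"
    define w where "w = \<tau> x * r"
    have rpos: "r > 0" unfolding r_def using Lp xpos by simp
    have wpos: "w > 0" unfolding w_def using tp rpos by simp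
    have tLp: "\<tau> x * Lp = \<mu>" unfolding Lp_def using tp by simp
    have gL: "g (L x) = G (L x) * \<tau> x" unfolding g_def using expL[of x] xpos by simp
    have lnmu: "ln \<mu> = F x - x - ln Z" unfolding \<mu>_def q_def using Zpos by (simp add: ln_div)
    have lnw: "ln w = - L x + ln r" unfolding w_def using tp rpos
      by (simp add: ln_mult L_def)
    have Grel: "F x \<le> G (L x) + (L x * ln r - L x + x)" unfolding r_def by (rule rel[OF xpos Lp])
    have eq: "g (L x) * Lp - \<mu> * ln Z -
        (((- \<mu>) * L x + \<tau> x * Lp) * ln (L x / x) + \<tau> x * L x * (Lp / L x - 1 / x))
        = G (L x) * \<mu> - \<mu> * ln Z + \<mu> * L x * ln r - \<mu> * ln r - \<mu> + w"
      unfolding gL w_def r_def Lp_def using tp Lp xpos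
      by (simp add: field_simps)
    have "G (L x) * \<mu> \<ge> (F x - (L x * ln r - L x + x)) * \<mu>"
      using Grel \<mu>pos by (intro mult_right_mono) auto
    moreover have "0 \<le> \<mu> * (ln \<mu> - ln w - 1) + w" by (rule key_ineq[OF \<mu>pos wpos])
    ultimately have "0 \<le> G (L x) * \<mu> - \<mu> * ln Z + \<mu> * L x * ln r - \<mu> * ln r - \<mu> + w"
      unfolding lnmu lnw by (simp add: algebra_simps)
    then show ?thesis using dd eq by auto
  qed
  have mono: "\<Gamma> e \<le> \<Gamma> X" if "0 < e" "e \<le> X" for e X
  proof (rule DERIV_nonneg_imp_increasing_open[OF that(2)])
    show "\<exists>y. (\<Gamma> has_real_derivative y) (at x) \<and> 0 \<le> y" if "e < x" "x < X" for x
      using dG[of x] that \<open>0 < e\<close> by auto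
    show "continuous_on {e..X} \<Gamma>"
    proof (intro continuous_at_imp_continuous_on ballI)
      fix x assume "x \<in> {e..X}"
      then have "x > 0" using \<open>0 < e\<close> by auto
      then obtain y where "(\<Gamma> has_real_derivative y) (at x)" using dG by blast
      then show "isCont \<Gamma> x" by (rule DERIV_isCont)
    qed
  qed
  have W: "at (0::real) within {0..1} = at_right 0" by (rule at_within_Icc_at_right) simp
  have R0': "\<tau> 0 = 1" "L 0 = 0" unfolding \<tau>_def L_def using R0 by simp_all
  have dR0: "(R has_real_derivative q 0) (at 0 within {0..1})" using dR[of 0] by simp
  have dL0: "(L has_real_derivative q 0 / Z) (at_right 0)"
    using dL[OF dR0] R0' W by simp
  have dt0: "(\<tau> has_real_derivative - (q 0 / Z)) (at_right 0)"
    using d\<tau>[OF dR0] W by simp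
  have Llim0: "(L \<longlongrightarrow> 0) (at_right 0)"
    using DERIV_continuous[OF dL0] R0' by (simp add: continuous_within)
  have tlim0: "(\<tau> \<longlongrightarrow> 1) (at_right 0)"
    using DERIV_continuous[OF dt0] R0' by (simp add: continuous_within)
  have ratio: "((\<lambda>y. L y / y) \<longlongrightarrow> q 0 / Z) (at_right 0)"
    using dL0 R0' unfolding has_field_derivative_iff by simp
  have lnratio: "((\<lambda>y. ln (L y / y)) \<longlongrightarrow> ln (q 0 / Z)) (at_right 0)"
    using qpos[of 0] Zpos by (intro tendsto_ln ratio) simp
  have klim: "((\<lambda>y. \<tau> y * L y * ln (L y / y)) \<longlongrightarrow> 1 * 0 * ln (q 0 / Z)) (at_right 0)"
    by (intro tendsto_mult tlim0 Llim0 lnratio)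
  have cGi: "continuous_on {0..1} Gi" unfolding Gi_def
    by (intro indefinite_integral_continuous_1 integrable_continuous_interval continuous_on_subset[OF cg]) auto
  have evL: "\<forall>\<^sub>F y in at_right 0. L y \<in> {0..1}"
  proof -
    have "\<forall>\<^sub>F y in at_right 0. L y < 1" using Llim0 by (rule order_tendstoD) simp
    moreover have "\<forall>\<^sub>F y in at_right (0::real). y > 0" by (simp add: eventually_at_right_less)
    ultimately show ?thesis by eventually_elim (use Lpos in \<open>auto intro: less_imp_le\<close>)
  qed
  have Gilim0: "((\<lambda>y. Gi (L y)) \<longlongrightarrow> Gi 0) (at_right 0)"
    by (rule continuous_on_tendsto_compose[OF cGi Llim0 _ evL]) simp
  have Gi0: "Gi 0 = 0" unfolding Gi_def by simp
  have Glim0: "(\<Gamma> \<longlongrightarrow> 0 - (1 - 1) * ln Z - 1 * 0 * ln (q 0 / Z)) (at_right 0)"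
    unfolding \<Gamma>_def[abs_def] using Gilim0 Gi0
    by (intro tendsto_diff tendsto_mult tlim0 klim tendsto_const) auto
  have Gnn: "\<Gamma> X \<ge> 0" if "X > 0" for X
  proof (rule tendsto_le[OF trivial_limit_at_right_real tendsto_const])
    show "(\<Gamma> \<longlongrightarrow> 0) (at_right 0)" using Glim0 by simp
    show "\<forall>\<^sub>F x in at_right 0. \<Gamma> x \<le> \<Gamma> X"
      unfolding eventually_at_right_field using that mono by (intro exI[of _ X]) auto
  qed
  have lowb: "Gi (L X) \<ge> (1 - \<tau> X) * ln Z - \<tau> X * X" if "X > 0" for X
  proof -
    have Lp: "L X > 0" using Lpos that by simp
    have "ln (X / L X) \<le> X / L X - 1" using Lp that by (intro ln_le_minus_one) auto
    then have "ln (L X / X) \<ge> 1 - X / L X" using Lp that by (simp add: ln_div)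
    then have "L X * ln (L X / X) \<ge> L X * (1 - X / L X)" using Lp by (intro mult_left_mono) auto
    moreover have "L X * (1 - X / L X) = L X - X" using Lp by (simp add: field_simps)
    ultimately have "L X * ln (L X / X) \<ge> - X" using Lp by linarith
    then have "\<tau> X * (L X * ln (L X / X)) \<ge> \<tau> X * (- X)"
      using \<tau>pos[of X] that by (intro mult_left_mono) auto
    then show ?thesis using Gnn[OF that] unfolding \<Gamma>_def by (simp add: algebra_simps)
  qed
  define K where "K = exp C / \<delta> / Z"
  have Kpos: "K > 0" unfolding K_def using dpos Zpos by simp
  have tK: "\<tau> X \<le> K * exp (- \<delta> * X)" if "X \<ge> 0" for X
    using \<tau>le[OF that] unfolding K_def by (simp add: field_simps)
  have tX0: "((\<lambda>X. \<tau> X * X) \<longlongrightarrow> 0) at_top"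
  proof (rule tendsto_sandwich[of "\<lambda>_. 0" _ _ "\<lambda>X. K * X * exp (- \<delta> * X)"])
    show "\<forall>\<^sub>F n in at_top. 0 \<le> \<tau> n * n"
      using eventually_ge_at_top[of 0] by eventually_elim (metis \<tau>pos less_imp_le mult_nonneg_nonneg)
    show "\<forall>\<^sub>F n in at_top. \<tau> n * n \<le> K * n * exp (- \<delta> * n)"
      using eventually_ge_at_top[of 0] by eventually_elim (use tK in \<open>simp add: mult_ac mult_left_mono\<close>)
    show "((\<lambda>X. K * X * exp (- \<delta> * X)) \<longlongrightarrow> 0) at_top" using dpos by real_asymp
  qed simp
  have t0: "(\<tau> \<longlongrightarrow> 0) at_top"
  proof (rule tendsto_sandwich[of "\<lambda>_. 0" _ _ "\<lambda>X. K * exp (- \<delta> * X)"])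
    show "\<forall>\<^sub>F n in at_top. 0 \<le> \<tau> n"
      using eventually_ge_at_top[of 0] by eventually_elim (use \<tau>pos in \<open>auto intro: less_imp_le\<close>)
    show "\<forall>\<^sub>F n in at_top. \<tau> n \<le> K * exp (- \<delta> * n)"
      using eventually_ge_at_top[of 0] by eventually_elim (use tK in auto)
    show "((\<lambda>X. K * exp (- \<delta> * X)) \<longlongrightarrow> 0) at_top" using dpos by real_asymp
  qed simp
  have Ltop: "filterlim L at_top at_top"
  proof (rule filterlim_at_top_mono)
    show "filterlim (\<lambda>X. \<delta> * X - ln K) at_top at_top" using dpos by real_asymp
    show "\<forall>\<^sub>F X in at_top. \<delta> * X - ln K \<le> L X"
      using eventually_ge_at_top[of 0]
    proof eventually_elim
      case (elim X)
      have "ln (\<tau> X) \<le> ln (K * exp (- \<delta> * X))"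
        using tK[OF elim] \<tau>pos[OF elim] Kpos by (subst ln_le_cancel_iff) auto
      also have "\<dots> = ln K - \<delta> * X" using Kpos by (simp add: ln_mult)
      finally show ?case unfolding L_def by simp
    qed
  qed
  define Ig where "Ig = (LINT y:{0..}|lborel. g y)"
  have mG: "G \<in> borel_measurable borel" by (rule borel_measurable_continuous_onI[OF contG])
  have mF: "F \<in> borel_measurable borel" by (rule borel_measurable_continuous_onI[OF contF])
  have dens_m: "(\<lambda>x::real. indicator {0..} x * exp (- x)) \<in> borel_measurable borel" by measurable
  have sig: "set_integrable lborel {0..} g"
  proof -
    have "integrable (density lborel (\<lambda>x. ennreal (indicator {0..} x * exp (- x)))) G"
      using intG unfolding eta_def by simp
    then have "integrable lborel (\<lambda>x. (indicator {0..} x * exp (- x)) *\<^sub>R G x)"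
      using mG by (subst (asm) integrable_density) (auto simp: dens_m)
    moreover have "(\<lambda>x. (indicator {0..} x * exp (- x)) *\<^sub>R G x) = (\<lambda>x. indicat_real {0..} x *\<^sub>R (G x * exp (- x)))"
      by (auto simp: mult_ac)
    ultimately show ?thesis unfolding set_integrable_def g_def by simp
  qed
  have intGeq: "(\<integral>x. G x \<partial>eta) = Ig"
  proof -
    have "(\<integral>x. G x \<partial>eta) = (\<integral>x. (indicator {0..} x * exp (- x)) *\<^sub>R G x \<partial>lborel)"
      unfolding eta_def using mG by (subst integral_density) (auto simp: dens_m)
    also have "\<dots> = Ig" unfolding Ig_def set_lebesgue_integral_def g_def
      by (rule arg_cong[where f="integral\<^sup>L lborel"]) (auto simp: mult_ac)
    finally show ?thesis .
  qed
  have Gitop: "(Gi \<longlongrightarrow> Ig) at_top"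
  proof -
    have lim: "((\<lambda>b. LINT y:{0..b}|lborel. g y) \<longlongrightarrow> Ig) at_top"
      unfolding Ig_def by (rule tendsto_set_lebesgue_integral_at_top[OF _ sig]) simp
    have ev: "\<forall>\<^sub>F b in at_top. (LINT y:{0..b}|lborel. g y) = Gi b"
      using eventually_ge_at_top[of 0]
    proof eventually_elim
      case (elim b)
      have "set_integrable lborel {0..b} g" by (rule set_integrable_subset[OF sig]) auto
      then show ?case unfolding Gi_def by (rule set_borel_integral_eq_integral(2))
    qed
    show ?thesis using lim unfolding tendsto_cong[OF ev] .
  qed
  have lnZ: "ln Z \<le> Ig"
  proof (rule tendsto_le[OF trivial_limit_at_top_linorder])
    show "((\<lambda>X. Gi (L X)) \<longlongrightarrow> Ig) at_top" by (rule filterlim_compose[OF Gitop Ltop])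
    show "((\<lambda>X. (1 - \<tau> X) * ln Z - \<tau> X * X) \<longlongrightarrow> ln Z) at_top"
      using tendsto_diff[OF tendsto_mult[OF tendsto_diff[OF tendsto_const[of 1] t0] tendsto_const[of "ln Z"]] tX0]
      by simp
    show "\<forall>\<^sub>F X in at_top. (1 - \<tau> X) * ln Z - \<tau> X * X \<le> Gi (L X)"
      using eventually_gt_at_top[of 0] by eventually_elim (rule lowb)
  qed
  have nnF: "(\<integral>\<^sup>+x. ennreal (exp (F x)) \<partial>eta) = ennreal Z"
  proof -
    have "(\<integral>\<^sup>+x. ennreal (exp (F x)) \<partial>eta) =
        (\<integral>\<^sup>+x. ennreal (indicator {0..} x * exp (- x)) * ennreal (exp (F x)) \<partial>lborel)"
      unfolding eta_def using mF by (subst nn_integral_density) (auto simp: dens_m)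
    also have "\<dots> = (\<integral>\<^sup>+x. ennreal (q x) * indicator {0..} x \<partial>lborel)"
      by (intro nn_integral_cong) (auto simp: q_def indicator_def ennreal_mult[symmetric] exp_diff exp_minus field_simps)
    also have "\<dots> = ennreal Z"
      using qpos P1(1)[of 0] unfolding Z_def T_def
      by (intro nn_integral_has_integral_lebesgue' integrable_integral) (auto intro: less_imp_le)
    finally show ?thesis .
  qed
  have "Z = exp (ln Z)" using Zpos by simp
  also have "\<dots> \<le> exp Ig" using lnZ by simp
  finally show ?thesis unfolding nnF intGeq by (intro ennreal_leI)
qed


lemma eta_alt: "eta = density lborel (exponential_density 1)"
  unfolding eta_def
  by (intro density_cong) (auto simp: exponential_density_def indicator_def)

lemma prob_eta: "prob_space eta"
  unfolding eta_alt by (rule prob_space_exponential_density) simp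

lemma space_eta[simp]: "space eta = UNIV" and sets_eta[simp]: "sets eta = sets borel"
  unfolding eta_def by simp_all

lemma eta_int_id: "integrable eta (\<lambda>x. x)"
proof -
  have m: "(\<lambda>x::real. indicator {0..} x * exp (- x)) \<in> borel_measurable borel" by measurable
  have "(\<integral>\<^sup>+x. ennreal (x^1 * exp (-x)) * indicator {0 ..} x \<partial>lborel) = 1"
    using nn_intergal_power_times_exp_Ici[of 1] by simp
  then have "(\<integral>\<^sup>+x. ennreal (norm ((indicator {0..} x * exp (- x)) *\<^sub>R x)) \<partial>lborel) = 1"
    by (subst (asm) nn_integral_cong[where v="\<lambda>x. ennreal (norm ((indicator {0..} x * exp (- x)) *\<^sub>R x))"])
       (auto simp: indicator_def abs_mult)
  then have "integrable lborel (\<lambda>x. (indicator {0..} x * exp (- x)) *\<^sub>R x)"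
    by (intro integrableI_bounded) (auto intro: borel_measurable_integrable m)
  then show ?thesis unfolding eta_def
    by (subst integrable_density) (auto simp: m)
qed

lemma jensen_exp:
  fixes f :: "'a \<Rightarrow> real"
  assumes "prob_space M" and f: "integrable M f"
  shows "ennreal (exp (\<integral>x. f x \<partial>M)) \<le> (\<integral>\<^sup>+ x. ennreal (exp (f x)) \<partial>M)"
proof -
  interpret prob_space M by fact
  define m where "m = (\<integral>x. f x \<partial>M)"
  define h where "h x = exp m * (1 + f x - m)" for x
  have hi: "integrable M h" unfolding h_def using f by auto
  have ih: "(\<integral>x. h x \<partial>M) = exp m"
    unfolding h_def m_def using f by (simp add: prob_space)
  have hle: "h x \<le> exp (f x)" for x
  proof -
    have "1 + (f x - m) \<le> exp (f x - m)" by (rule exp_ge_add_one_self)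
    then have "exp m * (1 + (f x - m)) \<le> exp m * exp (f x - m)" by (intro mult_left_mono) auto
    then show ?thesis unfolding h_def by (simp add: exp_diff add_diff_eq)
  qed
  have "(\<integral>x. h x \<partial>M) \<le> (\<integral>x. max (h x) 0 \<partial>M)"
    using hi by (intro integral_mono) auto
  also have "\<dots> = enn2real (\<integral>\<^sup>+ x. ennreal (max (h x) 0) \<partial>M)"
    using hi by (intro integral_eq_nn_integral) auto
  finally have "ennreal (exp m) \<le> ennreal (enn2real (\<integral>\<^sup>+ x. ennreal (max (h x) 0) \<partial>M))"
    using ih by (intro ennreal_leI) simp
  also have "\<dots> \<le> (\<integral>\<^sup>+ x. ennreal (max (h x) 0) \<partial>M)" by (simp add: ennreal_enn2real_if)
  also have "\<dots> \<le> (\<integral>\<^sup>+ x. ennreal (exp (f x)) \<partial>M)"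
    using hle by (intro nn_integral_mono ennreal_leI) (auto simp: max_def)
  finally show ?thesis unfolding m_def .
qed


lemma HL:
  fixes K :: "real \<Rightarrow> 'b \<Rightarrow> real" and W :: "real \<Rightarrow> real"
  assumes pN: "prob_space N"
  and Km: "(\<lambda>(y,x). K y x) \<in> borel_measurable (eta \<Otimes>\<^sub>M N)"
  and Kint: "\<And>x. x \<in> space N \<Longrightarrow> integrable eta (\<lambda>y. K y x)"
  and Wint: "integrable eta W"
  and hyp: "\<And>y. (\<integral>\<^sup>+x. ennreal (exp (K y x)) \<partial>N) \<le> ennreal (exp (W y))"
  shows "(\<integral>\<^sup>+x. ennreal (exp (\<integral>y. K y x \<partial>eta)) \<partial>N) \<le> ennreal (exp (\<integral>y. W y \<partial>eta))"
proof -
  interpret e: prob_space eta by (rule prob_eta)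
  interpret n: prob_space N by (rule pN)
  interpret pair_sigma_finite eta N
    by (intro pair_sigma_finite.intro e.sigma_finite_measure_axioms n.sigma_finite_measure_axioms)
  have Wm[measurable]: "W \<in> borel_measurable eta" using Wint by (rule borel_measurable_integrable)
  have Km'[measurable]: "(\<lambda>z. K (fst z) (snd z)) \<in> borel_measurable (eta \<Otimes>\<^sub>M N)"
    using Km by (simp add: case_prod_beta')
  have Ksw[measurable]: "(\<lambda>z. K (snd z) (fst z)) \<in> borel_measurable (N \<Otimes>\<^sub>M eta)"
    using measurable_pair_swap[OF Km'] by (simp add: case_prod_beta')
  have Ky[measurable]: "K y \<in> borel_measurable N" for y
    using measurable_Pair2[OF Km', of y] by simp
  let ?I = "\<integral>y. W y \<partial>eta"
  have step1: "ennreal (exp (\<integral>y. K y x \<partial>eta)) \<le> ennreal (exp ?I) * (\<integral>\<^sup>+ y. ennreal (exp (K y x - W y)) \<partial>eta)"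
    if x: "x \<in> space N" for x
  proof -
    have ki: "integrable eta (\<lambda>y. K y x - W y)" using Kint[OF x] Wint by auto
    have "(\<integral>y. K y x \<partial>eta) = ?I + (\<integral>y. K y x - W y \<partial>eta)"
      using Kint[OF x] Wint by simp
    then have "exp (\<integral>y. K y x \<partial>eta) = exp ?I * exp (\<integral>y. K y x - W y \<partial>eta)"
      by (simp add: exp_add)
    then have "ennreal (exp (\<integral>y. K y x \<partial>eta)) = ennreal (exp ?I) * ennreal (exp (\<integral>y. K y x - W y \<partial>eta))"
      by (simp add: ennreal_mult)
    also have "\<dots> \<le> ennreal (exp ?I) * (\<integral>\<^sup>+ y. ennreal (exp (K y x - W y)) \<partial>eta)"
      by (intro mult_left_mono jensen_exp[OF prob_eta ki]) auto
    finally show ?thesis .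
  qed
  have "(\<integral>\<^sup>+x. ennreal (exp (\<integral>y. K y x \<partial>eta)) \<partial>N)
      \<le> (\<integral>\<^sup>+x. ennreal (exp ?I) * (\<integral>\<^sup>+ y. ennreal (exp (K y x - W y)) \<partial>eta) \<partial>N)"
    by (intro nn_integral_mono step1)
  also have "\<dots> = ennreal (exp ?I) * (\<integral>\<^sup>+x. (\<integral>\<^sup>+ y. ennreal (exp (K y x - W y)) \<partial>eta) \<partial>N)"
    by (intro nn_integral_cmult) measurable
  also have "(\<integral>\<^sup>+x. (\<integral>\<^sup>+ y. ennreal (exp (K y x - W y)) \<partial>eta) \<partial>N)
      = (\<integral>\<^sup>+y. (\<integral>\<^sup>+ x. ennreal (exp (K y x - W y)) \<partial>N) \<partial>eta)"
    by (rule Fubini'[of "\<lambda>y x. ennreal (exp (K y x - W y))"]) (simp add: case_prod_beta')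
  also have "\<dots> = (\<integral>\<^sup>+y. ennreal (exp (- W y)) * (\<integral>\<^sup>+ x. ennreal (exp (K y x)) \<partial>N) \<partial>eta)"
  proof (intro nn_integral_cong)
    fix y
    have "(\<integral>\<^sup>+ x. ennreal (exp (K y x - W y)) \<partial>N) = (\<integral>\<^sup>+ x. ennreal (exp (- W y)) * ennreal (exp (K y x)) \<partial>N)"
      by (intro nn_integral_cong) (simp add: exp_diff exp_minus ennreal_mult[symmetric] field_simps)
    also have "\<dots> = ennreal (exp (- W y)) * (\<integral>\<^sup>+ x. ennreal (exp (K y x)) \<partial>N)"
      by (intro nn_integral_cmult) measurable
    finally show "(\<integral>\<^sup>+ x. ennreal (exp (K y x - W y)) \<partial>N) = ennreal (exp (- W y)) * (\<integral>\<^sup>+ x. ennreal (exp (K y x)) \<partial>N)" .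
  qed
  also have "\<dots> \<le> (\<integral>\<^sup>+y. ennreal (exp (- W y)) * ennreal (exp (W y)) \<partial>eta)"
    by (intro nn_integral_mono mult_left_mono hyp) auto
  also have "\<dots> = (\<integral>\<^sup>+y. 1 \<partial>eta)"
    by (intro nn_integral_cong) (simp add: ennreal_mult[symmetric] exp_minus)
  also have "\<dots> = 1" using e.emeasure_space_1 by simp
  finally show ?thesis by (simp add: mult_left_mono)
qed



definition phi :: "real \<Rightarrow> real \<Rightarrow> real" where "phi s x = (1 - exp (- s)) * x - s"
definition psi :: "real \<Rightarrow> real \<Rightarrow> real" where "psi s y = s * (y - 1)"

lemma phi_psi_rel:
  assumes x: "x > 0" and y: "y > 0"
  shows "phi s x \<le> psi s y + (y * ln (y / x) - y + x)"
proof -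
  define u where "u = y * exp s / x"
  have upos: "u > 0" unfolding u_def using x y by simp
  have "ln (1 / u) \<le> 1 / u - 1" using upos by (intro ln_le_minus_one) auto
  then have "y * ln (1 / u) \<le> y * (1 / u - 1)" using y by (intro mult_left_mono) auto
  moreover have "ln (1 / u) = ln x - ln y - s" unfolding u_def using x y by (simp add: ln_div ln_mult)
  moreover have "y * (1 / u) = x * exp (- s)" unfolding u_def using x y by (simp add: field_simps exp_minus)
  moreover have "y * ln (y / x) = y * ln y - y * ln x" using x y by (simp add: ln_div right_diff_distrib)
  ultimately show ?thesis unfolding phi_def psi_def by (simp add: algebra_simps)
qed

lemma continuous_on_MAX:
  fixes f :: "'j \<Rightarrow> 'a::topological_space \<Rightarrow> real"
  assumes "finite J" "J \<noteq> {}" "\<And>j. j \<in> J \<Longrightarrow> continuous_on S (f j)"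
  shows "continuous_on S (\<lambda>x. MAX j\<in>J. f j x)"
  using assms by (induct rule: finite_ne_induct) (auto intro: continuous_on_max)

lemma oneD_max:
  fixes t b :: "'j \<Rightarrow> real"
  assumes J: "finite J" "J \<noteq> {}"
  shows "(\<integral>\<^sup>+y. ennreal (exp (MAX j\<in>J. phi (t j) y + b j)) \<partial>eta)
    \<le> ennreal (exp (\<integral>y. (MAX j\<in>J. psi (t j) y + b j) \<partial>eta))"
proof -
  interpret e: prob_space eta by (rule prob_eta)
  obtain j0 where j0: "j0 \<in> J" using J by auto
  define \<delta> where "\<delta> = (MIN j\<in>J. exp (- t j))"
  define C where "C = (MAX j\<in>J. b j - t j)"
  have dpos: "\<delta> > 0" unfolding \<delta>_def using J by simp
  have dle: "\<delta> \<le> exp (- t j)" if "j \<in> J" for j unfolding \<delta>_def using J that by simp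
  show ?thesis
  proof (rule oneD[where \<delta>=\<delta> and C=C and B="\<bar>1 - exp (- t j0)\<bar>" and A="b j0 - t j0"])
    show "continuous_on UNIV (\<lambda>y. MAX j\<in>J. phi (t j) y + b j)"
      unfolding phi_def by (intro continuous_on_MAX J continuous_intros)
    show "continuous_on UNIV (\<lambda>y. MAX j\<in>J. psi (t j) y + b j)"
      unfolding psi_def by (intro continuous_on_MAX J continuous_intros)
    show "\<delta> > 0" by (rule dpos)
    show "\<bar>1 - exp (- t j0)\<bar> \<ge> 0" by simp
    show "(MAX j\<in>J. phi (t j) x + b j) \<le> (MAX j\<in>J. psi (t j) y + b j) + (y * ln (y / x) - y + x)"
      if "x > 0" "y > 0" for x y
    proof -
      have "phi (t j) x + b j \<le> (MAX j\<in>J. psi (t j) y + b j) + (y * ln (y / x) - y + x)" if "j \<in> J" for j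
      proof -
        have "psi (t j) y + b j \<le> (MAX j\<in>J. psi (t j) y + b j)" using J that by (intro Max_ge) auto
        then show ?thesis using phi_psi_rel[OF \<open>x > 0\<close> \<open>y > 0\<close>, of "t j"] by linarith
      qed
      then show ?thesis using J by (subst Max_le_iff) auto
    qed
    show "(MAX j\<in>J. phi (t j) x + b j) \<le> C + (1 - \<delta>) * x" if "x \<ge> 0" for x
    proof -
      have "phi (t j) x + b j \<le> C + (1 - \<delta>) * x" if "j \<in> J" for j
      proof -
        have "b j - t j \<le> C" unfolding C_def using J that by (intro Max_ge) auto
        moreover have "(1 - exp (- t j)) * x \<le> (1 - \<delta>) * x"
          using dle[OF that] \<open>x \<ge> 0\<close> by (intro mult_right_mono) auto
        ultimately show ?thesis unfolding phi_def by linarith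
      qed
      then show ?thesis using J by (subst Max_le_iff) auto
    qed
    show "b j0 - t j0 - \<bar>1 - exp (- t j0)\<bar> * x \<le> (MAX j\<in>J. phi (t j) x + b j)" if "x \<ge> 0" for x
    proof -
      have "phi (t j0) x + b j0 \<le> (MAX j\<in>J. phi (t j) x + b j)" using J j0 by (intro Max_ge) auto
      moreover have "- \<bar>1 - exp (- t j0)\<bar> * x \<le> (1 - exp (- t j0)) * x"
        using \<open>x \<ge> 0\<close> by (intro mult_right_mono) auto
      ultimately show ?thesis unfolding phi_def by linarith
    qed
    show "integrable eta (\<lambda>y. MAX j\<in>J. psi (t j) y + b j)"
      unfolding psi_def using eta_int_id by (intro integrable_MAX J) auto
  qed
qed


lemma prob_PiM_eta: "prob_space (PiM I (\<lambda>_. eta))"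
  by (intro prob_space_PiM prob_eta)

lemma comp_int:
  assumes "k \<in> I"
  shows "integrable (PiM I (\<lambda>_. eta)) (\<lambda>x. x k)"
proof -
  have "distr (PiM I (\<lambda>_. eta)) eta (\<lambda>x. x k) = eta"
    by (rule distr_PiM_component[OF prob_eta assms])
  then have "integrable (distr (PiM I (\<lambda>_. eta)) eta (\<lambda>x. x k)) (\<lambda>x. x)" using eta_int_id by simp
  moreover have "(\<lambda>x::real. x) \<in> borel_measurable eta" by (rule measurable_ident_sets) simp
  ultimately show ?thesis using assms by (subst (asm) integrable_distr_eq) auto
qed

lemma IntPsi:
  fixes s :: "'j \<Rightarrow> 'n \<Rightarrow> real"
  assumes "finite J" "J \<noteq> {}"
  shows "integrable (PiM I (\<lambda>_. eta)) (\<lambda>x. MAX j\<in>J. (\<Sum>k\<in>I. psi (s j k) (x k)) + a j)"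
proof -
  interpret p: prob_space "PiM I (\<lambda>_. eta)" by (rule prob_PiM_eta)
  have "integrable (PiM I (\<lambda>_. eta)) (\<lambda>x. (\<Sum>k\<in>I. psi (s j k) (x k)) + a j)" for j
  proof -
    have "integrable (PiM I (\<lambda>_. eta)) (\<lambda>x. psi (s j k) (x k))" if "k \<in> I" for k
      unfolding psi_def using comp_int[OF that] by auto
    then show ?thesis by (auto intro!: integrable_add integrable_sum p.integrable_const)
  qed
  then show ?thesis by (intro integrable_MAX assms)
qed

lemma FL:
  fixes s :: "'j \<Rightarrow> 'n \<Rightarrow> real" and I :: "'n set"
  assumes I: "finite I" and J: "finite J" "J \<noteq> {}"
  shows "\<forall>a. (\<integral>\<^sup>+x. ennreal (exp (MAX j\<in>J. (\<Sum>k\<in>I. phi (s j k) (x k)) + a j)) \<partial>PiM I (\<lambda>_. eta))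
    \<le> ennreal (exp (\<integral>x. (MAX j\<in>J. (\<Sum>k\<in>I. psi (s j k) (x k)) + a j) \<partial>PiM I (\<lambda>_. eta)))"
  using I
proof (induct rule: finite_induct)
  case empty
  show ?case
  proof
    fix a :: "'j \<Rightarrow> real"
    interpret p: prob_space "PiM {} (\<lambda>_::'n. eta)" by (rule prob_PiM_eta)
    have "(\<integral>\<^sup>+x. ennreal (exp (MAX j\<in>J. (\<Sum>k\<in>{}. phi (s j k) (x k)) + a j)) \<partial>PiM {} (\<lambda>_::'n. eta))
       = ennreal (exp (MAX j\<in>J. a j))"
      using p.emeasure_space_1 by simp
    moreover have "(\<integral>x. (MAX j\<in>J. (\<Sum>k\<in>{}. psi (s j k) (x k)) + a j) \<partial>PiM {} (\<lambda>_::'n. eta)) = (MAX j\<in>J. a j)"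
      using prob_space.prob_space[OF prob_PiM_eta[of "{}::'n set"]] by simp
    ultimately show "(\<integral>\<^sup>+x. ennreal (exp (MAX j\<in>J. (\<Sum>k\<in>{}. phi (s j k) (x k)) + a j)) \<partial>PiM {} (\<lambda>_::'n. eta))
      \<le> ennreal (exp (\<integral>x. (MAX j\<in>J. (\<Sum>k\<in>{}. psi (s j k) (x k)) + a j) \<partial>PiM {} (\<lambda>_::'n. eta)))"
      by (metis order.refl)
  qed
next
  case (insert i I)
  note IH = insert(3)
  show ?case
  proof
    fix a :: "'j \<Rightarrow> real"
    let ?N = "PiM I (\<lambda>_::'n. eta)"
    let ?N' = "PiM (insert i I) (\<lambda>_::'n. eta)"
    interpret P: product_sigma_finite "\<lambda>_::'n. eta"
      unfolding product_sigma_finite_def using prob_eta prob_space_imp_sigma_finite by blast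
    interpret pN: prob_space ?N by (rule prob_PiM_eta)
    interpret e: prob_space eta by (rule prob_eta)
    define B where "B j x = (\<Sum>k\<in>I. phi (s j k) (x k)) + a j" for j x
    define K where "K y x = (MAX j\<in>J. psi (s j i) y + B j x)" for y x
    define W where "W y = (\<integral>x. (MAX j\<in>J. (\<Sum>k\<in>I. psi (s j k) (x k)) + (a j + psi (s j i) y)) \<partial>?N)" for y
    define Wf where "Wf y x = (MAX j\<in>J. (\<Sum>k\<in>I. psi (s j k) (x k)) + (a j + psi (s j i) y))" for y x
    define Psi where "Psi z = (MAX j\<in>J. (\<Sum>k\<in>insert i I. psi (s j k) (z k)) + a j)" for z :: "'n \<Rightarrow> real"
    have Wf_m: "(\<lambda>(y, x). Wf y x) \<in> borel_measurable (eta \<Otimes>\<^sub>M ?N)"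
    proof -
      have c1: "(\<lambda>z. snd z k) \<in> borel_measurable (eta \<Otimes>\<^sub>M ?N)" if "k \<in> I" for k
      proof -
        have "(\<lambda>z. z k) \<in> measurable ?N eta" by (rule measurable_component_singleton) (use that in simp)
        then have "(\<lambda>z. z k) \<in> borel_measurable ?N" by (simp add: measurable_cong_sets[OF refl sets_eta])
        then show ?thesis by (rule measurable_compose[OF measurable_snd])
      qed
      have c2: "fst \<in> borel_measurable (eta \<Otimes>\<^sub>M ?N)"
        using measurable_fst[of eta ?N] by (simp add: measurable_cong_sets[OF refl sets_eta])
      have "(\<lambda>z. (\<Sum>k\<in>I. psi (s j k) (snd z k)) + (a j + psi (s j i) (fst z))) \<in> borel_measurable (eta \<Otimes>\<^sub>M ?N)" for j
        unfolding psi_def using c1 c2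
        by (intro borel_measurable_add borel_measurable_sum borel_measurable_times borel_measurable_diff
            borel_measurable_const) auto
      then have "(\<lambda>z. Wf (fst z) (snd z)) \<in> borel_measurable (eta \<Otimes>\<^sub>M ?N)"
        unfolding Wf_def using J by (intro borel_measurable_Max) auto
      then show ?thesis by (simp add: case_prod_beta')
    qed
    have Wm: "W \<in> borel_measurable eta"
    proof -
      have "(\<lambda>y. \<integral>x. Wf y x \<partial>?N) \<in> borel_measurable eta"
        by (rule pN.borel_measurable_lebesgue_integral[OF Wf_m])
      then show ?thesis unfolding W_def Wf_def by simp
    qed
    have iI: "{i} \<inter> I = {}" using insert(2) by auto
    have uI: "{i} \<union> I = insert i I" by auto
    have PsiInt: "integrable ?N' Psi" unfolding Psi_def by (rule IntPsi[OF J])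
    have merge_eq: "Psi (merge {i} I (u, x)) = Wf (u i) x" for u x
    proof -
      have "(\<Sum>k\<in>insert i I. psi (s j k) (merge {i} I (u, x) k)) = psi (s j i) (u i) + (\<Sum>k\<in>I. psi (s j k) (x k))" for j
      proof -
        have "(\<Sum>k\<in>insert i I. psi (s j k) (merge {i} I (u, x) k)) = psi (s j i) (merge {i} I (u, x) i) + (\<Sum>k\<in>I. psi (s j k) (merge {i} I (u, x) k))"
          using insert(1,2) by simp
        also have "(\<Sum>k\<in>I. psi (s j k) (merge {i} I (u, x) k)) = (\<Sum>k\<in>I. psi (s j k) (x k))"
          using insert(2) by (intro sum.cong) (auto simp: merge_def)
        finally show ?thesis by (simp add: merge_def)
      qed
      then show ?thesis unfolding Psi_def Wf_def by (simp add: ac_simps)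
    qed
    interpret U: prob_space "PiM {i} (\<lambda>_::'n. eta)" by (rule prob_PiM_eta)
    interpret UN: pair_sigma_finite "PiM {i} (\<lambda>_::'n. eta)" ?N
      by (intro pair_sigma_finite.intro U.sigma_finite_measure_axioms pN.sigma_finite_measure_axioms)
    have intM: "integrable (PiM {i} (\<lambda>_::'n. eta) \<Otimes>\<^sub>M ?N) (\<lambda>z. Psi (merge {i} I z))"
    proof -
      have "integrable (distr (PiM {i} (\<lambda>_::'n. eta) \<Otimes>\<^sub>M ?N) (PiM ({i} \<union> I) (\<lambda>_::'n. eta)) (merge {i} I)) Psi"
        by (subst P.distr_merge[OF iI]) (auto simp: insert(1) uI PsiInt)
      then show ?thesis by (rule integrable_distr[OF measurable_merge])
    qed
    have "integrable (PiM {i} (\<lambda>_::'n. eta)) (\<lambda>u. \<integral>x. Psi (merge {i} I (u, x)) \<partial>?N)"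
      by (rule UN.integrable_fst'[OF intM])
    then have intU: "integrable (PiM {i} (\<lambda>_::'n. eta)) (\<lambda>u. W (u i))"
      unfolding merge_eq W_def Wf_def .
    have Wint: "integrable eta W"
    proof -
      have "integrable (distr (PiM {i} (\<lambda>_::'n. eta)) eta (\<lambda>u. u i)) W"
        using intU Wm by (subst integrable_distr_eq) auto
      then show ?thesis by (simp add: P.distr_singleton)
    qed
    have Weq: "(\<integral>y. W y \<partial>eta) = (\<integral>z. (MAX j\<in>J. (\<Sum>k\<in>insert i I. psi (s j k) (z k)) + a j) \<partial>?N')"
    proof -
      have "(\<integral>z. Psi z \<partial>?N') = (\<integral>z. Psi z \<partial>PiM ({i} \<union> I) (\<lambda>_::'n. eta))" by (simp add: uI)
      also have "\<dots> = (\<integral>u. (\<integral>x. Psi (merge {i} I (u, x)) \<partial>?N) \<partial>PiM {i} (\<lambda>_::'n. eta))"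
        using PsiInt by (intro P.product_integral_fold iI) (auto simp: insert(1) uI)
      also have "\<dots> = (\<integral>u. W (u i) \<partial>PiM {i} (\<lambda>_::'n. eta))"
        unfolding merge_eq W_def Wf_def ..
      also have "\<dots> = (\<integral>y. W y \<partial>eta)" using Wm by (rule P.product_integral_singleton)
      finally show ?thesis unfolding Psi_def by simp
    qed
    have meas1: "(\<lambda>z. ennreal (exp (MAX j\<in>J. (\<Sum>k\<in>insert i I. phi (s j k) (z k)) + a j))) \<in> borel_measurable ?N'"
    proof -
      have "(\<lambda>z. z k) \<in> borel_measurable ?N'" if "k \<in> insert i I" for k
      proof -
        have "(\<lambda>z. z k) \<in> measurable ?N' eta" by (rule measurable_component_singleton) (use that in simp)
        then show ?thesis by (simp add: measurable_cong_sets[OF refl sets_eta])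
      qed
      then have "(\<lambda>z. (\<Sum>k\<in>insert i I. phi (s j k) (z k)) + a j) \<in> borel_measurable ?N'" for j
        unfolding phi_def by (intro borel_measurable_add borel_measurable_sum) auto
      then show ?thesis using J by measurable
    qed
    have "(\<integral>\<^sup>+z. ennreal (exp (MAX j\<in>J. (\<Sum>k\<in>insert i I. phi (s j k) (z k)) + a j)) \<partial>?N')
        = (\<integral>\<^sup>+x. (\<integral>\<^sup>+y. ennreal (exp (MAX j\<in>J. (\<Sum>k\<in>insert i I. phi (s j k) ((x(i := y)) k)) + a j)) \<partial>eta) \<partial>?N)"
      using insert(1,2) meas1 by (subst P.product_nn_integral_insert) auto
    also have "\<dots> = (\<integral>\<^sup>+x. (\<integral>\<^sup>+y. ennreal (exp (MAX j\<in>J. phi (s j i) y + B j x)) \<partial>eta) \<partial>?N)"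
    proof (intro nn_integral_cong)
      fix x y
      have eq: "(\<Sum>k\<in>insert i I. phi (s j k) ((x(i := y)) k)) + a j = phi (s j i) y + B j x" for j
      proof -
        have "(\<Sum>k\<in>insert i I. phi (s j k) ((x(i := y)) k)) = phi (s j i) y + (\<Sum>k\<in>I. phi (s j k) ((x(i := y)) k))"
          using insert(1,2) by simp
        also have "(\<Sum>k\<in>I. phi (s j k) ((x(i := y)) k)) = (\<Sum>k\<in>I. phi (s j k) (x k))"
          using insert(2) by (intro sum.cong) auto
        finally show ?thesis unfolding B_def by simp
      qed
      show "ennreal (exp (MAX j\<in>J. (\<Sum>k\<in>insert i I. phi (s j k) ((x(i := y)) k)) + a j)) =
            ennreal (exp (MAX j\<in>J. phi (s j i) y + B j x))"
        by (simp only: eq)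
    qed
    also have "\<dots> \<le> (\<integral>\<^sup>+x. ennreal (exp (\<integral>y. K y x \<partial>eta)) \<partial>?N)"
      unfolding K_def by (intro nn_integral_mono oneD_max J)
    also have "\<dots> \<le> ennreal (exp (\<integral>y. W y \<partial>eta))"
    proof (rule HL)
      show "prob_space ?N" by (rule prob_PiM_eta)
      show "(\<lambda>(y, x). K y x) \<in> borel_measurable (eta \<Otimes>\<^sub>M ?N)"
      proof -
        have c1: "(\<lambda>z. snd z k) \<in> borel_measurable (eta \<Otimes>\<^sub>M ?N)" if "k \<in> I" for k
        proof -
          have "(\<lambda>z. z k) \<in> measurable ?N eta" by (rule measurable_component_singleton) (use that in simp)
          then have "(\<lambda>z. z k) \<in> borel_measurable ?N" by (simp add: measurable_cong_sets[OF refl sets_eta])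
          then show ?thesis by (rule measurable_compose[OF measurable_snd])
        qed
        have c2: "fst \<in> borel_measurable (eta \<Otimes>\<^sub>M ?N)"
          using measurable_fst[of eta ?N] by (simp add: measurable_cong_sets[OF refl sets_eta])
        have "(\<lambda>z. psi (s j i) (fst z) + B j (snd z)) \<in> borel_measurable (eta \<Otimes>\<^sub>M ?N)" for j
          unfolding psi_def B_def phi_def using c1 c2
          by (intro borel_measurable_add borel_measurable_sum borel_measurable_times borel_measurable_diff
              borel_measurable_const) auto
        then have "(\<lambda>z. MAX j\<in>J. psi (s j i) (fst z) + B j (snd z)) \<in> borel_measurable (eta \<Otimes>\<^sub>M ?N)"
          using J by (intro borel_measurable_Max) auto
        then show ?thesis unfolding K_def by (simp add: case_prod_beta')
      qed
      show "integrable eta (\<lambda>y. K y x)" for x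
        unfolding K_def psi_def using eta_int_id by (intro integrable_MAX J) auto
      show "(\<integral>\<^sup>+x. ennreal (exp (K y x)) \<partial>?N) \<le> ennreal (exp (W y))" for y
      proof -
        have "K y x = (MAX j\<in>J. (\<Sum>k\<in>I. phi (s j k) (x k)) + (a j + psi (s j i) y))" for x
          unfolding K_def B_def by (simp add: ac_simps)
        then show ?thesis unfolding W_def using IH by simp
      qed
      show "integrable eta W" by (rule Wint)
    qed
    also have "(\<integral>y. W y \<partial>eta) = (\<integral>z. (MAX j\<in>J. (\<Sum>k\<in>insert i I. psi (s j k) (z k)) + a j) \<partial>?N')"
      by (rule Weq)
    finally show "(\<integral>\<^sup>+z. ennreal (exp (MAX j\<in>J. (\<Sum>k\<in>insert i I. phi (s j k) (z k)) + a j)) \<partial>?N')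
      \<le> ennreal (exp (\<integral>z. (MAX j\<in>J. (\<Sum>k\<in>insert i I. psi (s j k) (z k)) + a j) \<partial>?N'))" .
  qed
qed



lemma ereal_integral_real:
  fixes f :: "'a \<Rightarrow> real"
  assumes "integrable M f"
  shows "ereal_integral M (\<lambda>x. ereal (f x)) = ereal (\<integral>x. f x \<partial>M)"
proof -
  obtain r q where rq: "0 \<le> r" "0 \<le> q" "(\<integral>\<^sup>+x. ennreal (f x) \<partial>M) = ennreal r"
    "(\<integral>\<^sup>+x. ennreal (- f x) \<partial>M) = ennreal q" "integral\<^sup>L M f = r - q"
    using integrableE[OF assms] by metis
  have "ereal_integral M (\<lambda>x. ereal (f x)) =
      enn2ereal (\<integral>\<^sup>+x. ennreal (f x) \<partial>M) - enn2ereal (\<integral>\<^sup>+x. ennreal (- f x) \<partial>M)"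
    unfolding ereal_integral_def by simp
  also have "\<dots> = ereal (r - q)" using rq by simp
  finally show ?thesis using rq by simp
qed

lemma ereal_integral_mono:
  assumes "\<And>x. x \<in> space M \<Longrightarrow> f x \<le> g x"
  shows "ereal_integral M f \<le> ereal_integral M g"
proof -
  have "(\<integral>\<^sup>+x. e2ennreal (f x) \<partial>M) \<le> (\<integral>\<^sup>+x. e2ennreal (g x) \<partial>M)"
    using assms by (intro nn_integral_mono e2ennreal_mono) auto
  moreover have "(\<integral>\<^sup>+x. e2ennreal (- g x) \<partial>M) \<le> (\<integral>\<^sup>+x. e2ennreal (- f x) \<partial>M)"
    using assms by (intro nn_integral_mono e2ennreal_mono) auto
  ultimately show ?thesis unfolding ereal_integral_def
    by (intro ereal_minus_mono) (auto simp: less_eq_ennreal.rep_eq)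
qed


lemma comp_meas_eta_n: "(\<lambda>x. x i) \<in> borel_measurable (eta_n :: ('n::finite \<Rightarrow> real) measure)"
proof -
  have "(\<lambda>x. x i) \<in> measurable (PiM (UNIV::'n set) (\<lambda>_. eta)) eta"
    by (rule measurable_component_singleton) simp
  then show ?thesis unfolding eta_n_def by (simp add: measurable_cong_sets[OF refl sets_eta])
qed

theorem proposition2p5:
  fixes V :: "('n::finite \<Rightarrow> real) set"
  assumes "countable V"
  shows "ennreal_ln (\<integral>\<^sup>+ x. ereal_exp (SUP \<xi>\<in>V. ereal (inner_fun \<xi> x) - Lambda_eta_n \<xi>) \<partial>eta_n)
           \<le> ereal_integral eta_n (\<lambda>x. SUP \<xi>\<in>V. inner_Lambda \<xi> x)"
proof -
  define V' where "V' = {\<xi>\<in>V. \<forall>i. \<xi> i < 1}"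
  define sv where "sv \<xi> i = - ln (1 - \<xi> i)" for \<xi> :: "'n \<Rightarrow> real" and i
  define \<Phi> where "\<Phi> \<xi> x = (\<Sum>i\<in>UNIV. phi (sv \<xi> i) (x i))" for \<xi> x :: "'n \<Rightarrow> real"
  define \<Psi> where "\<Psi> \<xi> x = (\<Sum>i\<in>UNIV. psi (sv \<xi> i) (x i))" for \<xi> x :: "'n \<Rightarrow> real"
  have hV': "ereal (inner_fun \<xi> x) - Lambda_eta_n \<xi> = ereal (\<Phi> \<xi> x)" if "\<xi> \<in> V'" for \<xi> x
  proof -
    have lt: "\<xi> i < 1" for i using that unfolding V'_def by auto
    have "Lambda_eta_n \<xi> = ereal (\<Sum>i\<in>UNIV. sv \<xi> i)"
      unfolding Lambda_eta_n_def Lambda_eta_def sv_def using lt by simp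
    moreover have "phi (sv \<xi> i) (x i) = \<xi> i * x i - sv \<xi> i" for i
      using lt[of i] unfolding phi_def sv_def by simp
    ultimately show ?thesis unfolding \<Phi>_def inner_fun_def by (simp add: sum_subtractf)
  qed
  have hnV': "ereal (inner_fun \<xi> x) - Lambda_eta_n \<xi> = -\<infinity>" if xi: "\<xi> \<in> V" "\<xi> \<notin> V'" for \<xi> x
  proof -
    obtain i where "\<not> \<xi> i < 1" using xi unfolding V'_def by auto
    then have "Lambda_eta (\<xi> i) = \<infinity>" unfolding Lambda_eta_def by simp
    then have "Lambda_eta_n \<xi> = \<infinity>" unfolding Lambda_eta_n_def by (subst sum_Pinfty) auto
    then show ?thesis by simp
  qed
  have iV': "inner_Lambda \<xi> x = ereal (\<Psi> \<xi> x)" if "\<xi> \<in> V'" for \<xi> x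
  proof -
    have lt: "\<xi> i < 1" for i using that unfolding V'_def by auto
    then show ?thesis unfolding inner_Lambda_def \<Psi>_def psi_def Lambda_eta_def sv_def by simp
  qed
  let ?h = "\<lambda>x. SUP \<xi>\<in>V. ereal (inner_fun \<xi> x) - Lambda_eta_n \<xi>"
  let ?Z = "\<integral>\<^sup>+ x. ereal_exp (?h x) \<partial>eta_n"
  let ?R = "ereal_integral eta_n (\<lambda>x. SUP \<xi>\<in>V. inner_Lambda \<xi> x)"
  show ?thesis
  proof (cases "V' = {}")
    case True
    have "?h x = -\<infinity>" for x
    proof -
      have "ereal (inner_fun \<xi> x) - Lambda_eta_n \<xi> = bot" if "\<xi> \<in> V" for \<xi>
        using hnV'[OF that] True by (simp add: bot_ereal_def)
      then have "?h x = (SUP \<xi>\<in>V. (bot::ereal))" by (intro SUP_cong) auto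
      moreover have "(SUP \<xi>\<in>V. (bot::ereal)) = bot" by (cases "V = {}") auto
      ultimately show ?thesis by (simp add: bot_ereal_def)
    qed
    then have "?Z = 0" by (simp add: ereal_exp_def)
    then show ?thesis by (simp add: ennreal_ln_def)
  next
    case False
    have cV': "countable V'" using assms unfolding V'_def by (rule countable_subset[rotated]) auto
    define f where "f = from_nat_into V'"
    have rf: "range f = V'" unfolding f_def by (rule range_from_nat_into[OF False cV'])
    define Vk where "Vk k = f ` {..k}" for k
    have Vk_fin: "finite (Vk k)" and Vk_ne: "Vk k \<noteq> {}" and Vk_sub: "Vk k \<subseteq> V'" for k
      unfolding Vk_def using rf by auto
    have Vk_mono: "Vk k \<subseteq> Vk (Suc k)" for k unfolding Vk_def by auto
    define F where "F k x = (MAX \<xi>\<in>Vk k. \<Phi> \<xi> x)" for k x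
    define G where "G k x = (MAX \<xi>\<in>Vk k. \<Psi> \<xi> x)" for k x
    have FL_k: "(\<integral>\<^sup>+x. ennreal (exp (F k x)) \<partial>eta_n) \<le> ennreal (exp (\<integral>x. G k x \<partial>eta_n))" for k
      using spec[OF FL[OF finite_class.finite_UNIV Vk_fin Vk_ne, of sv], of "\<lambda>_. 0"]
      unfolding F_def G_def \<Phi>_def \<Psi>_def eta_n_def by simp
    have Gint: "integrable eta_n (G k)" for k
      using IntPsi[OF Vk_fin Vk_ne, of UNIV sv "\<lambda>_. 0"] unfolding G_def \<Psi>_def eta_n_def by simp
    have RG: "ereal (\<integral>x. G k x \<partial>eta_n) \<le> ?R" for k
    proof -
      have "ereal (\<integral>x. G k x \<partial>eta_n) = ereal_integral eta_n (\<lambda>x. ereal (G k x))"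
        by (rule ereal_integral_real[OF Gint, symmetric])
      also have "\<dots> \<le> ?R"
      proof (rule ereal_integral_mono)
        fix x
        obtain \<xi> where \<xi>: "\<xi> \<in> Vk k" "G k x = \<Psi> \<xi> x"
          using Max_in[OF finite_imageI[OF Vk_fin] imageE] Vk_ne unfolding G_def
          by (metis (no_types, lifting) Max_in empty_is_image finite_imageI imageE Vk_fin)
        have "\<xi> \<in> V" "\<xi> \<in> V'" using \<xi>(1) Vk_sub V'_def by auto
        then have "ereal (G k x) = inner_Lambda \<xi> x" using \<xi>(2) iV' by simp
        also have "\<dots> \<le> (SUP \<xi>\<in>V. inner_Lambda \<xi> x)" using \<open>\<xi> \<in> V\<close> by (rule SUP_upper)
        finally show "ereal (G k x) \<le> (SUP \<xi>\<in>V. inner_Lambda \<xi> x)" .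
      qed
      finally show ?thesis .
    qed
    show ?thesis
    proof (cases "?R = \<infinity>")
      case True
      then show ?thesis by simp
    next
      case Rfin: False
      have "?R \<noteq> -\<infinity>" using RG[of 0] by auto
      then obtain r where r: "?R = ereal r" using Rfin by (cases ?R) auto
      have Gr: "(\<integral>x. G k x \<partial>eta_n) \<le> r" for k using RG[of k] r by simp
      have Fm: "(\<lambda>x. F k x) \<in> borel_measurable eta_n" for k
      proof -
        have "(\<lambda>x. \<Phi> \<xi> x) \<in> borel_measurable eta_n" for \<xi>
          unfolding \<Phi>_def phi_def using comp_meas_eta_n
          by (intro borel_measurable_sum borel_measurable_diff borel_measurable_times borel_measurable_const) auto
        then show ?thesis unfolding F_def by (intro borel_measurable_Max Vk_fin)
      qed
      have inc: "incseq (\<lambda>k x. ennreal (exp (F k x)))"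
      proof (rule incseq_SucI, rule le_funI)
        fix k x
        have "F k x \<le> F (Suc k) x" unfolding F_def
          using Vk_mono Vk_ne Vk_fin by (intro Max_mono) auto
        then show "ennreal (exp (F k x)) \<le> ennreal (exp (F (Suc k) x))" by (intro ennreal_leI) simp
      qed
      have pw: "ereal_exp (?h x) \<le> (SUP k. ennreal (exp (F k x)))" for x
      proof (rule ccontr)
        let ?S = "SUP k. ennreal (exp (F k x))"
        assume "\<not> ereal_exp (?h x) \<le> ?S"
        then have lt: "?S < ereal_exp (?h x)" by simp
        then obtain s' where s': "?S = ennreal s'" "s' \<ge> 0"
          by (cases ?S rule: ennreal_cases) auto
        have hne: "?h x \<noteq> -\<infinity>" using lt by (auto simp: ereal_exp_def)
        obtain w where w: "ereal w < ?h x" "s' < exp w"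
        proof (cases "?h x")
          case (real v)
          then have "s' < exp v" using lt s' by (auto simp: ereal_exp_def ennreal_less_iff)
          define w where "w = ln ((s' + exp v) / 2)"
          have "exp w = (s' + exp v) / 2" unfolding w_def using s' by (intro exp_ln) (auto intro: add_nonneg_pos)
          moreover have "w < v"
          proof -
            have "(s' + exp v) / 2 < exp v" "(s' + exp v) / 2 > 0" using s' \<open>s' < exp v\<close> by auto
            then have "ln ((s' + exp v) / 2) < ln (exp v)" by (subst ln_less_cancel_iff) auto
            then show ?thesis unfolding w_def by simp
          qed
          ultimately show ?thesis using that[of w] real \<open>s' < exp v\<close> by auto
        next
          case PInf
          then show ?thesis using that[of "ln (s' + 1)"] s' by simp
        next
          case MInf
          then show ?thesis using hne by simp
        qed
        obtain \<xi> where \<xi>: "\<xi> \<in> V" "ereal w < ereal (inner_fun \<xi> x) - Lambda_eta_n \<xi>"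
          using w(1) by (auto simp: less_SUP_iff)
        have "\<xi> \<in> V'" using \<xi> hnV' by fastforce
        then obtain n where n: "\<xi> = f n" using rf by auto
        have "w < \<Phi> \<xi> x" using \<xi>(2) hV'[OF \<open>\<xi> \<in> V'\<close>] by simp
        also have "\<Phi> \<xi> x \<le> F n x" unfolding F_def n Vk_def using Vk_fin
          by (intro Max_ge) (auto simp: Vk_def)
        finally have "s' < exp (F n x)" using w(2) by (meson exp_less_cancel_iff less_trans)
        moreover have "ennreal (exp (F n x)) \<le> ?S" by (rule SUP_upper) simp
        ultimately show False using s' by simp
      qed
      have Zle: "?Z \<le> ennreal (exp r)"
      proof -
        have "?Z \<le> (\<integral>\<^sup>+x. (SUP k. ennreal (exp (F k x))) \<partial>eta_n)"
          by (intro nn_integral_mono pw)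
        also have "\<dots> = (SUP k. \<integral>\<^sup>+x. ennreal (exp (F k x)) \<partial>eta_n)"
          by (rule nn_integral_monotone_convergence_SUP[OF inc]) (use Fm in measurable)
        also have "\<dots> \<le> ennreal (exp r)"
        proof (rule SUP_least)
          fix k
          have "(\<integral>\<^sup>+x. ennreal (exp (F k x)) \<partial>eta_n) \<le> ennreal (exp (\<integral>x. G k x \<partial>eta_n))" by (rule FL_k)
          also have "\<dots> \<le> ennreal (exp r)" using Gr[of k] by (intro ennreal_leI) simp
          finally show "(\<integral>\<^sup>+x. ennreal (exp (F k x)) \<partial>eta_n) \<le> ennreal (exp r)" .
        qed
        finally show ?thesis .
      qed
      show ?thesis
      proof (cases "?Z = 0")
        case True
        then show ?thesis by (simp add: ennreal_ln_def)
      next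
        case Z0: False
        have Ztop: "?Z \<noteq> \<infinity>" using Zle by (auto simp: top_unique)
        have pos: "enn2real ?Z > 0" using Z0 Ztop by (simp add: enn2real_positive_iff less_top zero_less_iff_neq_zero)
        have "enn2real ?Z \<le> exp r" using Zle by (simp add: enn2real_leI)
        then have "ln (enn2real ?Z) \<le> ln (exp r)" using pos by (subst ln_le_cancel_iff) auto
        then have "ln (enn2real ?Z) \<le> r" by simp
        then show ?thesis using Z0 Ztop r by (simp add: ennreal_ln_def)
      qed
    qed
  qed
qed

end
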